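(* Let $n,T,K$ be positive integers, let $P_1,\ldots,P_T$ be $n\times n$ matrices and let $\hat P_1,\ldots,\hat P_T$ be (possibly random) $n\times n$ estimates of them. Define the $T\times T$ matrices $D_{ij}=\|P_i-P_j\|_F$ and $\hat D_{ij}=\|\hat P_i-\hat P_j\|_F$. Suppose $D$ has rank $K$; let $V$ (resp. $\hat V$) be a $T\times K$ matrix whose columns are orthonormal eigenvectors of $D$ (resp. $\hat D$) corresponding to its $K$ eigenvalues of largest absolute value, and let $\gamma$ be the smallest absolute value among the $K$ nonzero eigenvalues of $D$. Assume that for some absolute constants $\alpha,\beta>0$ and constants $C_1,\ldots,C_T$, for each $i=1,\ldots,T$, \[ \frac{\|\hat P_i-P_i\|_F^2}{n^2}\le C_i\, n^{-\alpha}(\log n)^{\beta}, \] either in expectation or with probability at least $1-\epsilon_{i,n}$. Let $C_T=\max_{1\le i\le T}C_i$. Then, in expectation (in the first case) or with probability at least $1-\sum_{i=1}^T\epsilon_{i,n}$ (in the second case), there is a $K\times K$ orthogonal matrix $\hat O$ with \[ \|\hat V\hat O-V\|_F^2\le \frac{64\,C_T\,T^2\,n^{2-\alpha}(\log n)^{\beta}}{\gamma^2}. \]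
   Context: $\|\cdot\|_F$ denotes the Frobenius norm. In the intended application, $P_i$ is the link probability matrix of the $i$-th observed network on a common node set of size $n$ and $\hat P_i$ is a graphon-based estimate of it computed from the observed adjacency matrix. *)

theory Defs
  imports "HOL-Analysis.Analysis" "HOL-Probability.Probability"
begin

definition frob_norm :: "real^'n^'m \<Rightarrow> real" where
  "frob_norm A = sqrt (\<Sum>i\<in>UNIV. \<Sum>j\<in>UNIV. (A $ i $ j)^2)"

definition dist_matrix :: "('t \<Rightarrow> real^'n^'n) \<Rightarrow> real^'t^'t" where
  "dist_matrix P = (\<chi> i j. frob_norm (P i - P j))"

definition is_eigenvalue :: "real^'t^'t \<Rightarrow> real \<Rightarrow> bool" where
  "is_eigenvalue A \<mu> \<longleftrightarrow> (\<exists>x. x \<noteq> 0 \<and> A *v x = \<mu> *\<^sub>R x)"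

text \<open>V (a T x K matrix) has orthonormal columns which are eigenvectors of A for
  the K eigenvalues of A of largest absolute value (counted with multiplicity):
  the columns are orthonormal eigenvectors with eigenvalues lam k, and every
  eigenvalue of A on the orthogonal complement of the column space has absolute
  value at most each |lam k|.\<close>
definition top_abs_eigvecs :: "real^'t^'t \<Rightarrow> real^'k^'t \<Rightarrow> bool" where
  "top_abs_eigvecs A V \<longleftrightarrow>
     transpose V ** V = mat 1 \<and>
     (\<exists>lam :: real^'k.
        (\<forall>k. A *v column k V = lam $ k *\<^sub>R column k V) \<and>
        (\<forall>x \<mu>. x \<noteq> 0 \<and> A *v x = \<mu> *\<^sub>R x \<and> (\<forall>k. column k V \<bullet> x = 0)
               \<longrightarrow> (\<forall>k. \<bar>\<mu>\<bar> \<le> \<bar>lam $ k\<bar>)))"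

definition min_nonzero_abs_eig :: "real^'t^'t \<Rightarrow> real" where
  "min_nonzero_abs_eig A = Min {\<bar>\<mu>\<bar> | \<mu>. \<mu> \<noteq> 0 \<and> is_eigenvalue A \<mu>}"

end

theory Submission
  imports Defs
begin

lemma sym_inner:
  fixes A :: "real^'n^'n"
  assumes "transpose A = A"
  shows "(A *v x) \<bullet> y = x \<bullet> (A *v y)"
proof -
  have "A *v x = x v* A" using transpose_matrix_vector[of A x] assms by simp
  then show ?thesis by (simp add: dot_lmul_matrix)
qed

lemma quad_nonpos_zero:
  fixes b c :: real
  assumes "\<And>t. 2*t*b + t^2*c \<le> 0"
  shows "b = 0"
proof (rule ccontr)
  assume "b \<noteq> 0"
  define s where "s = \<bar>c\<bar> + 1"
  define t where "t = b / s"
  have pos: "s > 0" "s \<ge> 1" "\<bar>c\<bar> \<le> s" by (auto simp: s_def)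
  have tb: "t*b = b^2/s" by (simp add: t_def power2_eq_square)
  have "t^2*\<bar>c\<bar> = b^2 * \<bar>c\<bar> / s^2" by (simp add: t_def power_divide)
  also have "\<dots> \<le> b^2 * s / s^2" using pos by (intro divide_right_mono mult_left_mono) auto
  also have "\<dots> = b^2 / s" using pos by (simp add: power2_eq_square)
  finally have "t^2*\<bar>c\<bar> \<le> b^2/s" .
  moreover have "- \<bar>c\<bar> \<le> c" by arith
  then have "t^2*c \<ge> - (t^2*\<bar>c\<bar>)" using mult_left_mono[of "- \<bar>c\<bar>" c "t^2"] by simp
  moreover have "b^2/s > 0" using \<open>b \<noteq> 0\<close> pos by simp
  ultimately have "2*t*b + t^2*c > 0" using tb by linarith
  then show False using assms[of t] by linarith
qed

lemma max_eigvec: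
  fixes A :: "real^'n^'n"
  assumes sym: "transpose A = A" and S: "subspace S" and inv: "\<forall>x\<in>S. A *v x \<in> S"
    and ne: "S \<noteq> {0}"
  shows "\<exists>x\<in>S. norm x = 1 \<and> A *v x = (x \<bullet> (A *v x)) *\<^sub>R x"
proof -
  let ?K = "S \<inter> sphere 0 1"
  have cK: "compact ?K"
    using compact_Int_closed[OF compact_sphere closed_subspace[OF S]] by (simp add: Int_commute)
  obtain z where z: "z \<in> S" "z \<noteq> 0" using ne S subspace_0 by blast
  then have "z /\<^sub>R norm z \<in> ?K" using S by (simp add: subspace_scale)
  then have neK: "?K \<noteq> {}" by blast
  have coK: "continuous_on ?K (\<lambda>x. x \<bullet> (A *v x))"
    by (intro continuous_on_inner continuous_on_id matrix_vector_mult_linear_continuous_on)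
  obtain x where x: "x \<in> ?K" and xmax0: "\<forall>y\<in>?K. y \<bullet> (A *v y) \<le> x \<bullet> (A *v x)"
    using continuous_attains_sup[OF cK neK coK] by blast
  have xmax: "\<And>y. y \<in> ?K \<Longrightarrow> y \<bullet> (A *v y) \<le> x \<bullet> (A *v x)" using xmax0 by blast
  define m where "m = x \<bullet> (A *v x)"
  have xS: "x \<in> S" and nx: "norm x = 1" using x by auto
  have xx: "x \<bullet> x = 1" using nx by (simp add: norm_eq_1)
  have quad: "(x + t *\<^sub>R y) \<bullet> (A *v (x + t *\<^sub>R y)) \<le> m * ((x + t *\<^sub>R y) \<bullet> (x + t *\<^sub>R y))"
    if "y \<in> S" for y t
  proof (cases "x + t *\<^sub>R y = 0")
    case True then show ?thesis by simp
  next
    case False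
    let ?u = "x + t *\<^sub>R y"
    have uS: "?u \<in> S" using xS that S by (simp add: subspace_add subspace_scale)
    have "?u /\<^sub>R norm ?u \<in> ?K" using uS False S by (simp add: subspace_scale)
    from xmax[OF this] have "(?u /\<^sub>R norm ?u) \<bullet> (A *v (?u /\<^sub>R norm ?u)) \<le> m" by (simp add: m_def)
    then have "(?u \<bullet> (A *v ?u)) / (norm ?u)^2 \<le> m"
      by (simp add: matrix_vector_mult_scaleR power2_eq_square divide_simps)
    then have "?u \<bullet> (A *v ?u) \<le> m * (norm ?u)^2" using False by (simp add: divide_simps)
    then show ?thesis by (simp add: power2_norm_eq_inner)
  qed
  have orth: "y \<bullet> (A *v x) = 0" if "y \<in> S" "y \<bullet> x = 0" for y
  proof -
    have yx: "x \<bullet> y = 0" using that by (simp add: inner_commute)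
    have Ayx: "x \<bullet> (A *v y) = y \<bullet> (A *v x)"
      using sym_inner[OF sym, of y x] by (simp add: inner_commute)
    have "2*t*(y \<bullet> (A *v x)) + t^2*(y \<bullet> (A *v y) - m * (y \<bullet> y)) \<le> 0" for t
    proof -
      have "(x + t *\<^sub>R y) \<bullet> (A *v (x + t *\<^sub>R y)) = m + 2*t*(y \<bullet> (A *v x)) + t^2*(y \<bullet> (A *v y))"
        by (simp add: matrix_vector_right_distrib matrix_vector_mult_scaleR inner_add_left inner_add_right
            m_def Ayx power2_eq_square algebra_simps)
      moreover have "(x + t *\<^sub>R y) \<bullet> (x + t *\<^sub>R y) = 1 + t^2 * (y \<bullet> y)"
        by (simp add: inner_add_left inner_add_right xx yx inner_commute[of y x] power2_eq_square)
      ultimately show ?thesis using quad[OF that(1), of t] by (simp add: algebra_simps)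
    qed
    then show ?thesis using quad_nonpos_zero by blast
  qed
  define r where "r = A *v x - m *\<^sub>R x"
  have rS: "r \<in> S" unfolding r_def using inv xS S by (simp add: subspace_diff subspace_scale)
  have "x \<bullet> (A *v x - m *\<^sub>R x) = 0" by (simp add: inner_diff_right m_def xx)
  then have rx: "r \<bullet> x = 0" unfolding r_def by (simp add: inner_commute)
  then have rA: "r \<bullet> (A *v x) = 0" using orth rS by blast
  have "r \<bullet> r = r \<bullet> (A *v x - m *\<^sub>R x)" by (simp add: r_def)
  also have "\<dots> = r \<bullet> (A *v x) - m * (r \<bullet> x)" by (simp add: inner_diff_right)
  finally have "r \<bullet> r = 0" using rx rA by simp
  then have "r = 0" by simp
  then show ?thesis using xS nx unfolding r_def m_def by auto
qed

lemma sym_eig_basis: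
  fixes A :: "real^'n^'n"
  assumes sym: "transpose A = A"
  shows "subspace S \<Longrightarrow> (\<forall>x\<in>S. A *v x \<in> S) \<Longrightarrow>
    \<exists>B. B \<subseteq> S \<and> finite B \<and> pairwise orthogonal B \<and>
        (\<forall>b\<in>B. norm b = 1 \<and> A *v b = (b \<bullet> (A *v b)) *\<^sub>R b) \<and> S \<subseteq> span B"
proof (induction "dim S" arbitrary: S rule: less_induct)
  case less
  show ?case
  proof (cases "S = {0}")
    case True
    then show ?thesis by (intro exI[of _ "{}"]) auto
  next
    case False
    obtain x where xS: "x \<in> S" and nx: "norm x = 1" and Ax: "A *v x = (x \<bullet> (A *v x)) *\<^sub>R x"
      using max_eigvec[OF sym less.prems False] by blast
    define m where "m = x \<bullet> (A *v x)"
    have xx: "x \<bullet> x = 1" using nx by (simp add: norm_eq_1)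
    define S' where "S' = S \<inter> {y. orthogonal x y}"
    have sS': "subspace S'" unfolding S'_def
      using less.prems(1) subspace_orthogonal_to_vector by (rule subspace_inter)
    have invS': "\<forall>y\<in>S'. A *v y \<in> S'"
    proof
      fix y assume y: "y \<in> S'"
      then have "A *v y \<in> S" using less.prems(2) by (auto simp: S'_def)
      moreover have "x \<bullet> (A *v y) = 0"
      proof -
        have "x \<bullet> (A *v y) = (A *v x) \<bullet> y" using sym_inner[OF sym, of x y] by simp
        also have "\<dots> = m * (x \<bullet> y)" using Ax by (simp add: m_def[symmetric])
        finally show ?thesis using y by (simp add: S'_def orthogonal_def)
      qed
      ultimately show "A *v y \<in> S'" by (simp add: S'_def orthogonal_def)
    qed
    have "x \<notin> S'" using xx by (simp add: S'_def orthogonal_def)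
    moreover have "S' \<subseteq> S" by (auto simp: S'_def)
    ultimately have "span S' \<subset> span S"
      using xS sS' less.prems(1) by (metis span_eq_iff psubsetI)
    then have "dim S' < dim S" by (rule dim_psubset)
    from less.hyps[OF this sS' invS'] obtain B' where B': "B' \<subseteq> S'" "finite B'" "pairwise orthogonal B'"
      "\<forall>b\<in>B'. norm b = 1 \<and> A *v b = (b \<bullet> (A *v b)) *\<^sub>R b" "S' \<subseteq> span B'" by blast
    have xB': "x \<notin> B'" using B'(1) \<open>x \<notin> S'\<close> by blast
    have orthx: "\<forall>b\<in>B'. orthogonal x b \<and> orthogonal b x"
      using B'(1) by (auto simp: S'_def orthogonal_def inner_commute)
    show ?thesis
    proof (intro exI[of _ "insert x B'"] conjI)
      show "insert x B' \<subseteq> S" using xS B'(1) by (auto simp: S'_def)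
      show "finite (insert x B')" using B'(2) by simp
      show "pairwise orthogonal (insert x B')"
        using B'(3) orthx by (auto simp: pairwise_insert)
      show "\<forall>b\<in>insert x B'. norm b = 1 \<and> A *v b = (b \<bullet> (A *v b)) *\<^sub>R b"
        using B'(4) nx Ax by auto
      show "S \<subseteq> span (insert x B')"
      proof
        fix z assume z: "z \<in> S"
        have "z - (z \<bullet> x) *\<^sub>R x \<in> S'"
          using z xS less.prems(1) by (simp add: S'_def orthogonal_def subspace_diff subspace_scale
              inner_diff_right xx inner_commute)
        then have "z - (z \<bullet> x) *\<^sub>R x \<in> span (insert x B')"
          using B'(5) span_mono[of B' "insert x B'"] by blast
        moreover have "(z \<bullet> x) *\<^sub>R x \<in> span (insert x B')"
          by (simp add: span_base span_scale)
        ultimately have "z - (z \<bullet> x) *\<^sub>R x + (z \<bullet> x) *\<^sub>R x \<in> span (insert x B')"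
          by (rule span_add)
        then show "z \<in> span (insert x B')" by simp
      qed
    qed
  qed
qed

lemma dim_UNIV_vec: "dim (UNIV :: (real^'n) set) = CARD('n)"
  by simp

lemma onb_matrix:
  fixes S :: "(real^'n) set"
  assumes po: "pairwise orthogonal S" and un: "\<forall>x\<in>S. norm x = 1" and cS: "card S = CARD('n)"
  obtains f where "bij_betw f UNIV S" "orthogonal_matrix (\<chi> i j. f j $ i)"
    "\<And>j. column j (\<chi> i j. f j $ i) = f j"
proof -
  have "finite S" using cS card_ge_0_finite[of S] by (metis card.infinite zero_less_card_finite)
  then obtain f where f: "bij_betw f (UNIV::'n set) S"
    by (metis cS finite_class.finite_UNIV finite_same_card_bij)
  have [simp]: "\<And>i. norm (f i) = 1"
    using bij_betwE [OF f] un by blast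
  have [simp]: "\<And>i j. i \<noteq> j \<Longrightarrow> orthogonal (f i) (f j)"
    using po f by (auto simp: pairwise_def bij_betw_def inj_on_def)
  have col: "\<And>j. column j (\<chi> i j. f j $ i) = f j" by (simp add: column_def)
  show thesis
  proof
    show "orthogonal_matrix (\<chi> i j. f j $ i)"
      by (simp add: orthogonal_matrix_orthonormal_columns col)
  qed (use f col in auto)
qed

lemma sym_onb:
  fixes A :: "real^'n^'n"
  assumes sym: "transpose A = A"
  obtains F :: "real^'n^'n" where "orthogonal_matrix F"
    "\<And>i. A *v column i F = (column i F \<bullet> (A *v column i F)) *\<^sub>R column i F"
proof -
  obtain B where B: "finite B" "pairwise orthogonal B"
      "\<forall>b\<in>B. norm b = 1 \<and> A *v b = (b \<bullet> (A *v b)) *\<^sub>R b" "UNIV \<subseteq> span B"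
    using sym_eig_basis[OF sym, of UNIV] by auto
  have "0 \<notin> B" using B(3) by force
  then have ind: "independent B" using B(2) pairwise_orthogonal_independent by blast
  have "card B = dim (span B)" using dim_span_eq_card_independent[OF ind] by simp
  also have "span B = UNIV" using B(4) by auto
  finally have cB: "card B = CARD('n)" by simp
  obtain f where f: "bij_betw f UNIV B" "orthogonal_matrix (\<chi> i j. f j $ i)"
    "\<And>j. column j (\<chi> i j. f j $ i) = f j"
    using onb_matrix[OF B(2) _ cB] B(3) by metis
  show thesis
  proof (rule that[OF f(2)])
    fix i
    have "f i \<in> B" using f(1) bij_betwE by blast
    then show "A *v column i (\<chi> i j. f j $ i) = (column i (\<chi> i j. f j $ i) \<bullet> (A *v column i (\<chi> i j. f j $ i))) *\<^sub>R column i (\<chi> i j. f j $ i)"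
      using B(3) f(3) by simp
  qed
qed

lemma frob_sq_cols: "frob_norm (X::real^'k^'t) ^ 2 = (\<Sum>k\<in>UNIV. column k X \<bullet> column k X)"
proof -
  have "frob_norm X ^ 2 = (\<Sum>i\<in>UNIV. \<Sum>j\<in>UNIV. (X $ i $ j)^2)"
    unfolding frob_norm_def by (simp add: sum_nonneg)
  also have "\<dots> = (\<Sum>j\<in>UNIV. \<Sum>i\<in>UNIV. (X $ i $ j)^2)" by (rule sum.swap)
  also have "\<dots> = (\<Sum>k\<in>UNIV. column k X \<bullet> column k X)"
    by (simp add: column_def inner_vec_def power2_eq_square)
  finally show ?thesis .
qed

lemma tm_entry: "(transpose (A::real^'k^'t) ** (B::real^'l^'t)) $ i $ j = column i A \<bullet> column j B"
  by (simp add: matrix_matrix_mult_def transpose_def column_def inner_vec_def)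

lemma trace_tm: "trace (transpose (A::real^'k^'t) ** (B::real^'k^'t)) = (\<Sum>k\<in>UNIV. column k A \<bullet> column k B)"
  by (simp add: trace_def tm_entry)

lemma col_mult: "column k (A ** B) = A *v column k (B::real^'k^'n)"
  by (simp add: column_def matrix_matrix_mult_def matrix_vector_mult_def vec_eq_iff)

lemma col_diff: "column k (A - B) = column k A - column k (B::real^'k^'n)"
  by (simp add: column_def vec_eq_iff)

lemma adj_inner: "((A::real^'n^'m) *v x) \<bullet> z = x \<bullet> (transpose A *v z)"
proof -
  have "x \<bullet> (transpose A *v z) = (z v* A) \<bullet> x" by (simp add: inner_commute)
  also have "\<dots> = z \<bullet> (A *v x)" by (rule dot_lmul_matrix)
  finally show ?thesis by (simp add: inner_commute)
qed

lemma isom_inner: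
  assumes "transpose W ** W = mat 1"
  shows "((W::real^'n^'m) *v x) \<bullet> (W *v y) = x \<bullet> y"
  using adj_inner[of W x "W *v y"] by (simp add: matrix_vector_mul_assoc assms)

lemma bessel_mat:
  assumes W: "transpose W ** W = mat 1"
  shows "norm (transpose (W::real^'n^'m) *v y) \<le> norm y"
proof -
  define p where "p = W *v (transpose W *v y)"
  have "transpose W *v (y - p) = 0"
    by (simp add: p_def matrix_vector_mult_diff_distrib matrix_vector_mul_assoc W)
  then have "(y - p) \<bullet> p = 0"
    using adj_inner[of W "transpose W *v y" "y - p"] by (simp add: p_def inner_commute)
  moreover have "p \<bullet> p = (transpose W *v y) \<bullet> (transpose W *v y)"
    unfolding p_def by (rule isom_inner[OF W])
  moreover have "y \<bullet> y = (y - p) \<bullet> (y - p) + 2 * ((y - p) \<bullet> p) + p \<bullet> p"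
    by (simp add: inner_diff_left inner_diff_right inner_commute)
  ultimately have "(transpose W *v y) \<bullet> (transpose W *v y) \<le> y \<bullet> y"
    by simp
  then show ?thesis by (simp add: norm_le)
qed

lemma procrustes:
  fixes W V :: "real^'k^'t"
  assumes W: "transpose W ** W = mat 1" and V: "transpose V ** V = mat 1"
  shows "\<exists>Q. orthogonal_matrix Q \<and>
     frob_norm (W ** Q - V)^2 \<le> 2 * (real CARD('k) - frob_norm (transpose W ** V)^2)"
proof -
  define N where "N = transpose W ** V"
  define M where "M = transpose N ** N"
  have symM: "transpose M = M" by (simp add: M_def matrix_transpose_mul)
  obtain F where F: "orthogonal_matrix F"
    and Fe: "\<And>i. M *v column i F = (column i F \<bullet> (M *v column i F)) *\<^sub>R column i F"
    using sym_onb[OF symM] by blast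
  define f where "f i = column i F" for i
  have fn: "norm (f i) = 1" for i using F by (simp add: orthogonal_matrix_orthonormal_columns f_def)
  have fo: "i \<noteq> j \<Longrightarrow> f i \<bullet> f j = 0" for i j
    using F by (simp add: orthogonal_matrix_orthonormal_columns f_def orthogonal_def)
  define s where "s i = f i \<bullet> (M *v f i)" for i
  have Mf: "M *v f i = s i *\<^sub>R f i" for i using Fe by (simp add: f_def s_def)
  have NN: "(N *v f i) \<bullet> (N *v f j) = s j * (f i \<bullet> f j)" for i j
  proof -
    have "(N *v f i) \<bullet> (N *v f j) = f i \<bullet> (M *v f j)"
      using adj_inner[of N "f i" "N *v f j"] by (simp add: M_def matrix_vector_mul_assoc)
    then show ?thesis by (simp add: Mf)
  qed
  define \<sigma> where "\<sigma> i = norm (N *v f i)" for i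
  have \<sigma>0: "0 \<le> \<sigma> i" for i by (simp add: \<sigma>_def)
  have \<sigma>1: "\<sigma> i \<le> 1" for i
  proof -
    have "N *v f i = transpose W *v (V *v f i)" by (simp add: N_def matrix_vector_mul_assoc)
    then have "\<sigma> i \<le> norm (V *v f i)" using bessel_mat[OF W] by (simp add: \<sigma>_def)
    also have "norm (V *v f i) = norm (f i)"
      using isom_inner[OF V, of "f i" "f i"] by (simp add: norm_eq_sqrt_inner)
    finally show ?thesis using fn by simp
  qed
  define P where "P = {i. \<sigma> i \<noteq> 0}"
  define g where "g i = (1 / \<sigma> i) *\<^sub>R (N *v f i)" for i
  have gn: "i \<in> P \<Longrightarrow> norm (g i) = 1" for i by (simp add: g_def P_def \<sigma>_def)
  have go: "i \<in> P \<Longrightarrow> j \<in> P \<Longrightarrow> i \<noteq> j \<Longrightarrow> g i \<bullet> g j = 0" for i j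
    by (simp add: g_def NN fo)
  define Asp where "Asp = span (g ` P)"
  define R where "R = {y. \<forall>x\<in>Asp. orthogonal x y}"
  have sR: "subspace R" unfolding R_def by (rule subspace_orthogonal_to_vectors)
  have "dim {y \<in> UNIV. \<forall>x\<in>Asp. orthogonal x y} + dim Asp = dim (UNIV :: (real^'k) set)"
    by (rule dim_subspace_orthogonal_to_vectors) (auto simp: Asp_def)
  then have dimR: "dim R + dim Asp = CARD('k)" by (simp add: R_def)
  have injg: "inj_on g P"
  proof (rule inj_onI)
    fix i j assume "i \<in> P" "j \<in> P" "g i = g j"
    then show "i = j" using go gn by (metis inner_eq_zero_iff norm_zero zero_neq_one)
  qed
  have pog: "pairwise orthogonal (g ` P)"
    using go injg by (auto simp: pairwise_def orthogonal_def)
  have "0 \<notin> g ` P" using gn by force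
  then have indg: "independent (g ` P)" using pog pairwise_orthogonal_independent by blast
  have "dim Asp = card (g ` P)" unfolding Asp_def by (rule dim_span_eq_card_independent[OF indg])
  also have "\<dots> = card P" by (rule card_image[OF injg])
  finally have dimA: "dim Asp = card P" .
  obtain BR where BR: "BR \<subseteq> R" "pairwise orthogonal BR" "\<And>x. x \<in> BR \<Longrightarrow> norm x = 1"
      "independent BR" "card BR = dim R" "span BR = R"
    using orthonormal_basis_subspace[OF sR] by metis
  have finBR: "finite BR" using BR(4) independent_imp_finite by blast
  have "card (- P) = CARD('k) - card P" by (simp add: Compl_eq_Diff_UNIV card_Diff_subset)
  then have cBR: "card BR = card (- P)" using BR(5) dimR dimA by simp
  obtain \<phi> where \<phi>: "bij_betw \<phi> (- P) BR"
    using finite_same_card_bij[OF _ finBR cBR[symmetric]] by (meson finite)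
  define g' where "g' i = (if i \<in> P then g i else \<phi> i)" for i
  have \<phi>R: "i \<notin> P \<Longrightarrow> \<phi> i \<in> BR" for i using \<phi> bij_betwE by blast
  have gA: "i \<in> P \<Longrightarrow> g i \<in> Asp" for i by (simp add: Asp_def span_base)
  have g'n: "norm (g' i) = 1" for i using gn BR(3) \<phi>R by (simp add: g'_def)
  have g'o: "i \<noteq> j \<Longrightarrow> g' i \<bullet> g' j = 0" for i j
  proof -
    assume ij: "i \<noteq> j"
    show ?thesis
    proof (cases "i \<in> P"; cases "j \<in> P")
      assume "i \<in> P" "j \<in> P" then show ?thesis using go ij by (simp add: g'_def)
    next
      assume "i \<in> P" "j \<notin> P"
      then show ?thesis using gA \<phi>R BR(1) by (auto simp: g'_def R_def orthogonal_def)
    next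
      assume "i \<notin> P" "j \<in> P"
      then show ?thesis using gA \<phi>R BR(1) by (auto simp: g'_def R_def orthogonal_def inner_commute)
    next
      assume "i \<notin> P" "j \<notin> P"
      then have "\<phi> i \<noteq> \<phi> j" using \<phi> ij by (auto simp: bij_betw_def inj_on_def)
      then show ?thesis using \<open>i \<notin> P\<close> \<open>j \<notin> P\<close> \<phi>R BR(2)
        by (auto simp: g'_def pairwise_def orthogonal_def)
    qed
  qed
  define G :: "real^'k^'k" where "G = (\<chi> a b. g' b $ a)"
  have colG: "column i G = g' i" for i by (simp add: G_def column_def)
  have G: "orthogonal_matrix G"
    by (simp add: orthogonal_matrix_orthonormal_columns colG g'n g'o orthogonal_def)
  have Nf: "N *v f i = \<sigma> i *\<^sub>R g' i" for i
    by (cases "i \<in> P") (auto simp: g'_def g_def P_def \<sigma>_def)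
  define Q where "Q = G ** transpose F"
  have Q: "orthogonal_matrix Q" unfolding Q_def using G F by (simp add: orthogonal_matrix_mul)
  have FFt: "F ** transpose F = mat 1" using F by (simp add: orthogonal_matrix_def)
  have tr1: "trace (transpose Q ** N) = (\<Sum>i\<in>UNIV. \<sigma> i)"
  proof -
    have "transpose Q ** N = F ** (transpose G ** N)"
      by (simp add: Q_def matrix_transpose_mul matrix_mul_assoc)
    then have "trace (transpose Q ** N) = trace ((transpose G ** N) ** F)"
      using trace_mul_sym[of F "transpose G ** N"] by simp
    also have "\<dots> = trace (transpose G ** (N ** F))" by (simp add: matrix_mul_assoc)
    also have "\<dots> = (\<Sum>i\<in>UNIV. g' i \<bullet> (N *v f i))" by (simp add: trace_tm colG col_mult f_def)
    also have "\<dots> = (\<Sum>i\<in>UNIV. \<sigma> i)" using g'n by (simp add: Nf norm_eq_1)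
    finally show ?thesis .
  qed
  have tr2: "frob_norm N ^ 2 = (\<Sum>i\<in>UNIV. (\<sigma> i)^2)"
  proof -
    have "frob_norm N ^ 2 = trace (transpose N ** N)" by (simp add: frob_sq_cols trace_tm)
    also have "\<dots> = trace ((transpose N ** N) ** (F ** transpose F))" by (simp add: FFt)
    also have "\<dots> = trace (((transpose N ** N) ** F) ** transpose F)" by (simp add: matrix_mul_assoc)
    also have "\<dots> = trace (transpose F ** ((transpose N ** N) ** F))" by (rule trace_mul_sym)
    also have "\<dots> = (\<Sum>i\<in>UNIV. f i \<bullet> (M *v f i))" by (simp add: trace_tm col_mult f_def M_def)
    also have "\<dots> = (\<Sum>i\<in>UNIV. (N *v f i) \<bullet> (N *v f i))"
      by (intro sum.cong refl) (simp add: adj_inner M_def matrix_vector_mul_assoc)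
    also have "\<dots> = (\<Sum>i\<in>UNIV. (\<sigma> i)^2)" by (simp add: \<sigma>_def power2_norm_eq_inner)
    finally show ?thesis .
  qed
  have colsO: "column k Q \<bullet> column k Q = 1" for k
    using Q by (simp add: orthogonal_matrix_orthonormal_columns norm_eq_1)
  have colsV: "column k V \<bullet> column k V = 1" for k
    using tm_entry[of V V k k] V by (simp add: mat_def)
  have "frob_norm (W ** Q - V)^2 = (\<Sum>k\<in>UNIV. (W *v column k Q - column k V) \<bullet> (W *v column k Q - column k V))"
    by (simp add: frob_sq_cols col_diff col_mult)
  also have "\<dots> = (\<Sum>k\<in>UNIV. 2 - 2 * (column k Q \<bullet> column k N))"
  proof (intro sum.cong refl)
    fix k
    have a: "(W *v column k Q) \<bullet> (W *v column k Q) = 1" by (simp add: isom_inner[OF W] colsO)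
    have b: "(W *v column k Q) \<bullet> column k V = column k Q \<bullet> column k N"
      by (simp add: adj_inner N_def col_mult)
    show "(W *v column k Q - column k V) \<bullet> (W *v column k Q - column k V) = 2 - 2 * (column k Q \<bullet> column k N)"
      using a b colsV by (simp add: inner_diff_left inner_diff_right inner_commute[of "column k V"])
  qed
  also have "\<dots> = 2 * real CARD('k) - 2 * trace (transpose Q ** N)"
    by (simp add: trace_tm sum_subtractf sum_distrib_left)
  also have "\<dots> \<le> 2 * (real CARD('k) - frob_norm N ^ 2)"
  proof -
    have "(\<Sum>i\<in>UNIV. (\<sigma> i)^2) \<le> (\<Sum>i\<in>UNIV. \<sigma> i)"
    proof (rule sum_mono)
      fix i show "(\<sigma> i)^2 \<le> \<sigma> i" using \<sigma>0[of i] \<sigma>1[of i] by (simp add: power2_eq_square mult_left_le)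
    qed
    then show ?thesis using tr1 tr2 by simp
  qed
  finally show ?thesis using Q unfolding N_def by blast
qed

lemma orthonormal_cols:
  assumes "transpose V ** V = mat 1"
  shows "column k (V::real^'k^'t) \<bullet> column l V = (if k = l then 1 else 0)"
  using tm_entry[of V V k l] assms by (simp add: mat_def)

lemma bessel_vec:
  fixes u :: "'i \<Rightarrow> 'a::real_inner"
  assumes fin: "finite I" and on: "\<And>i j. i \<in> I \<Longrightarrow> j \<in> I \<Longrightarrow> u i \<bullet> u j = (if i = j then 1 else 0)"
  shows "(\<Sum>i\<in>I. (y \<bullet> u i)^2) \<le> y \<bullet> y"
proof -
  define c where "c i = y \<bullet> u i" for i
  define p where "p = (\<Sum>i\<in>I. c i *\<^sub>R u i)"
  have pu: "p \<bullet> u j = c j" if "j \<in> I" for j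
  proof -
    have "p \<bullet> u j = (\<Sum>i\<in>I. c i * (u i \<bullet> u j))" by (simp add: p_def inner_sum_left)
    also have "\<dots> = (\<Sum>i\<in>I. if i = j then c i else 0)"
      by (intro sum.cong refl) (simp add: on that)
    also have "\<dots> = c j" using fin that by simp
    finally show ?thesis .
  qed
  have "p \<bullet> (\<Sum>i\<in>I. c i *\<^sub>R u i) = (\<Sum>i\<in>I. c i * (p \<bullet> u i))"
    by (simp add: inner_sum_right)
  also have "\<dots> = (\<Sum>i\<in>I. (c i)^2)"
    by (intro sum.cong refl) (simp add: pu power2_eq_square)
  finally have pp: "p \<bullet> p = (\<Sum>i\<in>I. (c i)^2)" by (simp add: p_def)
  have yp: "y \<bullet> p = (\<Sum>i\<in>I. (c i)^2)"
    by (simp add: p_def inner_sum_right c_def power2_eq_square)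
  have "0 \<le> (y - p) \<bullet> (y - p)" by simp
  also have "\<dots> = y \<bullet> y - 2 * (y \<bullet> p) + p \<bullet> p"
    by (simp add: inner_diff_left inner_diff_right inner_commute)
  finally show ?thesis using pp yp by (simp add: c_def)
qed

lemma norm_sq_vec: "(x::real^'n) \<bullet> x = (\<Sum>r\<in>UNIV. (x $ r)^2)"
  by (simp add: inner_vec_def power2_eq_square)

lemma frob_sq_rows: "frob_norm (X::real^'k^'t) ^ 2 = (\<Sum>r\<in>UNIV. X $ r \<bullet> X $ r)"
  unfolding frob_norm_def by (simp add: sum_nonneg norm_sq_vec)

lemma frob_bessel:
  fixes E :: "real^'n^'m" and u :: "'i \<Rightarrow> real^'n"
  assumes fin: "finite I" and on: "\<And>i j. i \<in> I \<Longrightarrow> j \<in> I \<Longrightarrow> u i \<bullet> u j = (if i = j then 1 else 0)"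
  shows "(\<Sum>i\<in>I. (E *v u i) \<bullet> (E *v u i)) \<le> frob_norm E ^ 2"
proof -
  have "(\<Sum>i\<in>I. (E *v u i) \<bullet> (E *v u i)) = (\<Sum>i\<in>I. \<Sum>r\<in>UNIV. (E $ r \<bullet> u i)^2)"
    by (simp add: norm_sq_vec matrix_vector_mul_component)
  also have "\<dots> = (\<Sum>r\<in>UNIV. \<Sum>i\<in>I. (E $ r \<bullet> u i)^2)" by (rule sum.swap)
  also have "\<dots> \<le> (\<Sum>r\<in>UNIV. E $ r \<bullet> E $ r)"
    by (intro sum_mono bessel_vec[OF fin on]) auto
  also have "\<dots> = frob_norm E ^ 2" by (simp add: frob_sq_rows)
  finally show ?thesis .
qed

lemma parseval_set:
  fixes B :: "(real^'n) set"
  assumes "finite B" "pairwise orthogonal B" "\<forall>b\<in>B. norm b = 1" "x \<in> span B"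
  shows "x \<bullet> x = (\<Sum>b\<in>B. (x \<bullet> b)^2)"
proof -
  have "x = (\<Sum>b\<in>B. (x \<bullet> b) *\<^sub>R b)"
    using orthonormal_basis_expand[OF assms(2) _ assms(4,1)] assms(3) by simp
  then have "x \<bullet> x = x \<bullet> (\<Sum>b\<in>B. (x \<bullet> b) *\<^sub>R b)" by simp
  also have "\<dots> = (\<Sum>b\<in>B. (x \<bullet> b)^2)" by (simp add: inner_sum_right power2_eq_square)
  finally show ?thesis .
qed

lemma expand_span:
  fixes B :: "(real^'n) set"
  assumes "finite B" "pairwise orthogonal B" "\<forall>b\<in>B. norm b = 1" "x \<in> span B"
  shows "A *v x = (\<Sum>b\<in>B. (x \<bullet> b) *\<^sub>R (A *v b))"
proof -
  have "x = (\<Sum>b\<in>B. (x \<bullet> b) *\<^sub>R b)"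
    using orthonormal_basis_expand[OF assms(2) _ assms(4,1)] assms(3) by simp
  then have "A *v x = A *v (\<Sum>b\<in>B. (x \<bullet> b) *\<^sub>R b)" by simp
  also have "\<dots> = (\<Sum>b\<in>B. (x \<bullet> b) *\<^sub>R (A *v b))"
    by (subst linear_sum[OF matrix_vector_mul_linear]) (simp add: matrix_vector_mult_scaleR)
  finally show ?thesis .
qed

lemma proj_perp:
  assumes V: "transpose V ** V = mat 1"
  shows "column l (V::real^'k^'t) \<bullet> (x - (\<Sum>k\<in>UNIV. (column k V \<bullet> x) *\<^sub>R column k V)) = 0"
proof -
  have "column l V \<bullet> (\<Sum>k\<in>UNIV. (column k V \<bullet> x) *\<^sub>R column k V)
        = (\<Sum>k\<in>UNIV. (column k V \<bullet> x) * (column l V \<bullet> column k V))"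
    by (simp add: inner_sum_right)
  also have "\<dots> = (\<Sum>k\<in>UNIV. if k = l then column k V \<bullet> x else 0)"
    by (intro sum.cong refl) (auto simp: orthonormal_cols[OF V])
  also have "\<dots> = column l V \<bullet> x" by simp
  finally show ?thesis by (simp add: inner_diff_right)
qed

lemma pop_facts:
  fixes D :: "real^'t^'t" and V :: "real^'k^'t"
  assumes sym: "transpose D = D" and rk: "rank D = CARD('k)"
    and tV: "top_abs_eigvecs D V"
  obtains lam where "\<forall>k. D *v column k V = lam k *\<^sub>R column k V" "\<forall>k. lam k \<noteq> 0"
    "\<forall>x. (\<forall>k. column k V \<bullet> x = 0) \<longrightarrow> D *v x = 0"
proof -
  from tV obtain lamv :: "real^'k" where V: "transpose V ** V = mat 1"
    and ev: "\<forall>k. D *v column k V = lamv $ k *\<^sub>R column k V"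
    and top: "\<forall>x \<mu>. x \<noteq> 0 \<and> D *v x = \<mu> *\<^sub>R x \<and> (\<forall>k. column k V \<bullet> x = 0)
               \<longrightarrow> (\<forall>k. \<bar>\<mu>\<bar> \<le> \<bar>lamv $ k\<bar>)"
    unfolding top_abs_eigvecs_def by blast
  define v where "v k = column k V" for k
  define lam where "lam k = lamv $ k" for k
  have vv: "v k \<bullet> v l = (if k = l then 1 else 0)" for k l by (simp add: v_def orthonormal_cols[OF V])
  have injv: "inj v" by (rule injI) (metis vv zero_neq_one)
  have Dv: "D *v v k = lam k *\<^sub>R v k" for k using ev by (simp add: v_def lam_def)
  define C where "C = {x. \<forall>k. v k \<bullet> x = 0}"
  have "C = {y. \<forall>x\<in>range v. orthogonal x y}" by (auto simp: C_def orthogonal_def)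
  then have sC: "subspace C" using subspace_orthogonal_to_vectors[of "range v"] by simp
  have invC: "\<forall>x\<in>C. D *v x \<in> C"
  proof
    fix x assume "x \<in> C"
    have "v k \<bullet> (D *v x) = 0" for k
      using sym_inner[OF sym, of "v k" x] \<open>x \<in> C\<close> by (simp add: Dv C_def)
    then show "D *v x \<in> C" by (simp add: C_def)
  qed
  obtain B where B: "B \<subseteq> C" "finite B" "pairwise orthogonal B"
      "\<forall>b\<in>B. norm b = 1 \<and> D *v b = (b \<bullet> (D *v b)) *\<^sub>R b" "C \<subseteq> span B"
    using sym_eig_basis[OF sym sC invC] by blast
  have rkr: "dim (range (\<lambda>x. D *v x)) = CARD('k)" using rk rank_dim_range by metis
  have nu0: "b \<bullet> (D *v b) = 0" if bB: "b \<in> B" for b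
  proof (rule ccontr)
    define \<nu> where "\<nu> = b \<bullet> (D *v b)"
    assume "b \<bullet> (D *v b) \<noteq> 0"
    then have n0: "\<nu> \<noteq> 0" by (simp add: \<nu>_def)
    have bC: "b \<in> C" using B(1) bB by blast
    have nb: "norm b = 1" and Db: "D *v b = \<nu> *\<^sub>R b" using B(4) bB by (auto simp: \<nu>_def)
    have "b \<noteq> 0" using nb by auto
    then have "\<forall>k. \<bar>\<nu>\<bar> \<le> \<bar>lam k\<bar>" using top Db bC by (auto simp: C_def v_def lam_def)
    then have l0: "lam k \<noteq> 0" for k using n0 by (metis abs_le_zero_iff abs_zero)
    define S where "S = insert b (range v)"
    have bnv: "b \<notin> range v"
    proof
      assume "b \<in> range v" then obtain k where "b = v k" by blast
      then show False using bC vv[of k k] by (simp add: C_def)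
    qed
    have "S \<subseteq> range (\<lambda>x. D *v x)"
    proof
      fix y assume "y \<in> S"
      then consider "y = b" | k where "y = v k" by (auto simp: S_def)
      then show "y \<in> range (\<lambda>x. D *v x)"
      proof cases
        case 1
        have "D *v ((1/\<nu>) *\<^sub>R b) = y" using 1 n0 by (simp add: matrix_vector_mult_scaleR Db)
        then show ?thesis by (metis rangeI)
      next
        case 2
        have "D *v ((1/lam k) *\<^sub>R v k) = y" using 2 l0[of k] by (simp add: matrix_vector_mult_scaleR Dv)
        then show ?thesis by (metis rangeI)
      qed
    qed
    moreover have "independent S"
    proof (rule pairwise_orthogonal_independent)
      show "pairwise orthogonal S" unfolding pairwise_def orthogonal_def
      proof (intro ballI impI)
        fix x y assume xy: "x \<in> S" "y \<in> S" "x \<noteq> y"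
        have bv: "b \<bullet> v k = 0" "v k \<bullet> b = 0" for k
          using bC by (auto simp: C_def inner_commute[of b])
        show "x \<bullet> y = 0"
        proof (cases "x = b")
          case True
          then obtain l where "y = v l" using xy by (auto simp: S_def)
          then show ?thesis using True bv by simp
        next
          case False
          then obtain k where k: "x = v k" using xy by (auto simp: S_def)
          show ?thesis
          proof (cases "y = b")
            case True then show ?thesis using k bv by simp
          next
            case False
            then obtain l where "y = v l" using xy by (auto simp: S_def)
            then show ?thesis using k xy(3) vv[of k l] by auto
          qed
        qed
      qed
      have "v k \<noteq> 0" for k using vv[of k k] by auto
      then show "0 \<notin> S" unfolding S_def using nb by auto
    qed
    ultimately have "card S \<le> CARD('k)" using independent_card_le_dim rkr by metis
    moreover have "card S = CARD('k) + 1" using bnv injv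
      by (simp add: S_def card_image)
    ultimately show False by simp
  qed
  have DC: "D *v x = 0" if "x \<in> C" for x
  proof -
    have "D *v x = (\<Sum>b\<in>B. (x \<bullet> b) *\<^sub>R (D *v b))"
      using expand_span[OF B(2,3) _ ] B(4,5) that by blast
    also have "\<dots> = 0" using B(4) nu0 by (intro sum.neutral) auto
    finally show ?thesis .
  qed
  have decomp: "D *v x = (\<Sum>k\<in>UNIV. ((v k \<bullet> x) * lam k) *\<^sub>R v k)" for x
  proof -
    define c where "c = x - (\<Sum>k\<in>UNIV. (v k \<bullet> x) *\<^sub>R v k)"
    have "c \<in> C" using proj_perp[OF V] by (simp add: C_def c_def v_def)
    have "x = (\<Sum>k\<in>UNIV. (v k \<bullet> x) *\<^sub>R v k) + c" by (simp add: c_def)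
    then have "D *v x = D *v (\<Sum>k\<in>UNIV. (v k \<bullet> x) *\<^sub>R v k) + D *v c"
      by (metis matrix_vector_right_distrib)
    also have "D *v c = 0" using DC \<open>c \<in> C\<close> by blast
    also have "D *v (\<Sum>k\<in>UNIV. (v k \<bullet> x) *\<^sub>R v k) = (\<Sum>k\<in>UNIV. (v k \<bullet> x) *\<^sub>R (D *v v k))"
      by (subst linear_sum[OF matrix_vector_mul_linear]) (simp add: matrix_vector_mult_scaleR)
    finally show ?thesis by (simp add: Dv)
  qed
  have lnz: "lam k0 \<noteq> 0" for k0
  proof
    assume l0: "lam k0 = 0"
    have "range (\<lambda>x. D *v x) \<subseteq> span (v ` (- {k0}))"
    proof
      fix y assume "y \<in> range (\<lambda>x. D *v x)"
      then obtain x where y: "y = D *v x" by blast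
      show "y \<in> span (v ` (- {k0}))" unfolding y decomp
      proof (rule span_sum)
        fix k assume "k \<in> (UNIV :: 'k set)"
        show "((v k \<bullet> x) * lam k) *\<^sub>R v k \<in> span (v ` (- {k0}))"
        proof (cases "k = k0")
          case True then show ?thesis using l0 by (simp add: span_zero)
        next
          case False then show ?thesis by (intro span_scale span_base) auto
        qed
      qed
    qed
    then have "dim (range (\<lambda>x. D *v x)) \<le> card (v ` (- {k0}))" by (rule dim_le_card) simp
    also have "\<dots> \<le> card (- {k0})" by (rule card_image_le) simp
    also have "\<dots> = CARD('k) - 1" by (simp add: Compl_eq_Diff_UNIV card_Diff_subset)
    moreover have "0 < CARD('k)" by (simp add: card_gt_0_iff)
    ultimately show False using rkr by linarith
  qed
  show thesis
  proof (rule that[of lam])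
    show "\<forall>k. D *v column k V = lam k *\<^sub>R column k V" using Dv by (simp add: v_def)
    show "\<forall>k. lam k \<noteq> 0" using lnz by blast
    show "\<forall>x. (\<forall>k. column k V \<bullet> x = 0) \<longrightarrow> D *v x = 0" using DC by (simp add: C_def v_def)
  qed
qed

lemma eig_in_onb:
  fixes D :: "real^'t^'t"
  assumes sym: "transpose D = D" and F: "orthogonal_matrix F"
    and Fe: "\<And>i. D *v column i F = (column i F \<bullet> (D *v column i F)) *\<^sub>R column i F"
    and y: "y \<noteq> 0" "D *v y = m *\<^sub>R y"
  shows "\<exists>i. m = column i F \<bullet> (D *v column i F)"
proof -
  have tc: "(transpose F *v y) $ i = column i F \<bullet> y" for i
    by (simp add: matrix_vector_mul_component transpose_def column_def inner_vec_def)
  have "\<exists>i. column i F \<bullet> y \<noteq> 0"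
  proof (rule ccontr)
    assume "\<not> ?thesis"
    then have "transpose F *v y = 0" by (simp add: vec_eq_iff tc del: transpose_matrix_vector)
    then have "F *v (transpose F *v y) = 0" by (simp del: transpose_matrix_vector)
    moreover have "F ** transpose F = mat 1" using F by (simp add: orthogonal_matrix_def)
    ultimately have "y = 0" by (simp add: matrix_vector_mul_assoc del: transpose_matrix_vector)
    then show False using y by simp
  qed
  then obtain i where i: "column i F \<bullet> y \<noteq> 0" by blast
  define s where "s = column i F \<bullet> (D *v column i F)"
  have e: "D *v column i F = s *\<^sub>R column i F" using Fe[of i] unfolding s_def[symmetric] .
  have "m * (column i F \<bullet> y) = column i F \<bullet> (D *v y)" using y by simp
  also have "\<dots> = (D *v column i F) \<bullet> y" using sym_inner[OF sym] by simp
  also have "\<dots> = s * (column i F \<bullet> y)" by (simp add: e)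
  finally have "m = s" using i by simp
  then show ?thesis unfolding s_def by blast
qed

lemma gamma_facts:
  fixes D :: "real^'t^'t"
  assumes sym: "transpose D = D" and x: "D *v x = \<mu> *\<^sub>R x" "x \<noteq> 0" and mu: "\<mu> \<noteq> 0"
  shows "0 < min_nonzero_abs_eig D \<and> min_nonzero_abs_eig D \<le> \<bar>\<mu>\<bar>"
proof -
  obtain F :: "real^'t^'t" where F: "orthogonal_matrix F"
    and Fe: "\<And>i. D *v column i F = (column i F \<bullet> (D *v column i F)) *\<^sub>R column i F"
    using sym_onb[OF sym] by blast
  define Ev where "Ev = {\<bar>\<mu>\<bar> | \<mu>. \<mu> \<noteq> 0 \<and> is_eigenvalue D \<mu>}"
  have "Ev \<subseteq> (\<lambda>i. \<bar>column i F \<bullet> (D *v column i F)\<bar>) ` UNIV"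
  proof
    fix a assume "a \<in> Ev"
    then obtain m y where "a = \<bar>m\<bar>" "y \<noteq> 0" "D *v y = m *\<^sub>R y"
      by (auto simp: Ev_def is_eigenvalue_def)
    then show "a \<in> (\<lambda>i. \<bar>column i F \<bullet> (D *v column i F)\<bar>) ` UNIV"
      using eig_in_onb[OF sym F Fe] by blast
  qed
  then have fin: "finite Ev" by (rule finite_subset) simp
  have mem: "\<bar>\<mu>\<bar> \<in> Ev" using x mu by (auto simp: Ev_def is_eigenvalue_def)
  have "Min Ev \<in> Ev" using fin mem by (intro Min_in) auto
  then have "Min Ev > 0" by (auto simp: Ev_def)
  moreover have "Min Ev \<le> \<bar>\<mu>\<bar>" using fin mem by (rule Min_le)
  ultimately show ?thesis by (simp add: min_nonzero_abs_eig_def Ev_def)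
qed

lemma proj_norm:
  assumes V: "transpose V ** V = mat 1"
  shows "(x - (\<Sum>k\<in>UNIV. (column k (V::real^'k^'t) \<bullet> x) *\<^sub>R column k V)) \<bullet>
         (x - (\<Sum>k\<in>UNIV. (column k V \<bullet> x) *\<^sub>R column k V))
       = x \<bullet> x - (\<Sum>k\<in>UNIV. (column k V \<bullet> x)^2)"
proof -
  define p where "p = (\<Sum>k\<in>UNIV. (column k V \<bullet> x) *\<^sub>R column k V)"
  have perp: "column k V \<bullet> (x - p) = 0" for k using proj_perp[OF V] by (simp add: p_def)
  have "(x - p) \<bullet> p = (\<Sum>k\<in>UNIV. (column k V \<bullet> x) * ((x - p) \<bullet> column k V))"
    by (simp add: p_def inner_sum_right)
  also have "\<dots> = 0" using perp by (simp add: inner_commute)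
  finally have xpp: "(x - p) \<bullet> p = 0" .
  have px: "p \<bullet> x = (\<Sum>k\<in>UNIV. (column k V \<bullet> x)^2)"
    by (simp add: p_def inner_sum_left power2_eq_square)
  have "(x - p) \<bullet> (x - p) = (x - p) \<bullet> x - (x - p) \<bullet> p" by (simp add: inner_diff_right)
  also have "\<dots> = x \<bullet> x - p \<bullet> x" using xpp by (simp add: inner_diff_left)
  finally show ?thesis using px by (simp add: p_def)
qed

lemma sq_le_from:
  fixes g a b :: real
  assumes "0 < g" "(g/2) * \<bar>a\<bar> \<le> \<bar>b\<bar>"
  shows "g^2 * a^2 \<le> 4 * b^2"
proof -
  have n: "0 \<le> g * \<bar>a\<bar>" using assms by simp
  have l: "g * \<bar>a\<bar> \<le> 2 * \<bar>b\<bar>" using assms(2) by simp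
  have "(g * \<bar>a\<bar>)^2 \<le> (2 * \<bar>b\<bar>)^2" by (rule power_mono[OF l n])
  then show ?thesis by (simp add: power_mult_distrib power2_abs)
qed

lemma sin_bound:
  fixes D Dh :: "real^'t^'t" and V Vh :: "real^'k^'t"
  assumes symD: "transpose D = D" and symDh: "transpose Dh = Dh"
    and rk: "rank D = CARD('k)"
    and tV: "top_abs_eigvecs D V" and tVh: "top_abs_eigvecs Dh Vh"
  shows "0 < min_nonzero_abs_eig D \<and>
    (min_nonzero_abs_eig D)^2 * (real CARD('k) - frob_norm (transpose Vh ** V)^2) \<le> 4 * frob_norm (Dh - D)^2"
proof -
  obtain lam where Dv: "\<forall>k. D *v column k V = lam k *\<^sub>R column k V" and lnz: "\<forall>k. lam k \<noteq> 0"
    and Dperp: "\<forall>x. (\<forall>k. column k V \<bullet> x = 0) \<longrightarrow> D *v x = 0"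
    using pop_facts[OF symD rk tV] by blast
  from tVh obtain muv :: "real^'k" where Vh: "transpose Vh ** Vh = mat 1"
    and evh: "\<forall>k. Dh *v column k Vh = muv $ k *\<^sub>R column k Vh"
    and toph: "\<forall>x \<mu>. x \<noteq> 0 \<and> Dh *v x = \<mu> *\<^sub>R x \<and> (\<forall>k. column k Vh \<bullet> x = 0)
               \<longrightarrow> (\<forall>k. \<bar>\<mu>\<bar> \<le> \<bar>muv $ k\<bar>)"
    unfolding top_abs_eigvecs_def by blast
  have V: "transpose V ** V = mat 1" using tV by (simp add: top_abs_eigvecs_def)
  define v where "v k = column k V" for k
  define w where "w l = column l Vh" for l
  define \<mu> where "\<mu> l = muv $ l" for l
  define \<gamma> where "\<gamma> = min_nonzero_abs_eig D"
  define E where "E = Dh - D"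
  have vv: "v k \<bullet> v l = (if k = l then 1 else 0)" for k l by (simp add: v_def orthonormal_cols[OF V])
  have ww: "w k \<bullet> w l = (if k = l then 1 else 0)" for k l by (simp add: w_def orthonormal_cols[OF Vh])
  have Dvk: "D *v v k = lam k *\<^sub>R v k" for k using Dv by (simp add: v_def)
  have Dhw: "Dh *v w l = \<mu> l *\<^sub>R w l" for l using evh by (simp add: w_def \<mu>_def)
  have Ex: "E *v x = Dh *v x - D *v x" for x by (simp add: E_def matrix_vector_mult_diff_rdistrib)
  have symE: "transpose E = E" using symD symDh by (simp add: E_def transpose_def vec_eq_iff)
  have gk: "0 < \<gamma> \<and> \<gamma> \<le> \<bar>lam k\<bar>" for k
  proof -
    have "v k \<noteq> 0" using vv[of k k] by auto
    then show ?thesis using gamma_facts[OF symD Dvk _ ] lnz by (simp add: \<gamma>_def)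
  qed
  then have g0: "0 < \<gamma>" by blast
  define cs where "cs = (\<Sum>l\<in>UNIV. \<Sum>k\<in>UNIV. (w l \<bullet> v k)^2)"
  have fN: "frob_norm (transpose Vh ** V)^2 = cs"
    unfolding frob_norm_def cs_def by (simp add: sum_nonneg tm_entry w_def v_def)
  have "\<gamma>^2 * (real CARD('k) - cs) \<le> 4 * frob_norm E ^ 2"
  proof (cases "\<forall>l. \<gamma>/2 \<le> \<bar>\<mu> l\<bar>")
    case True
    have each: "\<gamma>^2 * (1 - (\<Sum>k\<in>UNIV. (w l \<bullet> v k)^2)) \<le> 4 * ((E *v w l) \<bullet> (E *v w l))" for l
    proof -
      define q where "q = w l - (\<Sum>k\<in>UNIV. (v k \<bullet> w l) *\<^sub>R v k)"
      have perp: "v k \<bullet> q = 0" for k using proj_perp[OF V] by (simp add: q_def v_def)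
      have Dq: "D *v q = 0" using Dperp perp by (simp add: v_def)
      have qq: "q \<bullet> q = 1 - (\<Sum>k\<in>UNIV. (w l \<bullet> v k)^2)"
        using proj_norm[OF V, of "w l"] ww[of l l] by (simp add: q_def v_def inner_commute)
      have qw: "q \<bullet> w l = q \<bullet> q"
      proof -
        have "q \<bullet> (\<Sum>k\<in>UNIV. (v k \<bullet> w l) *\<^sub>R v k) = 0"
          using perp by (simp add: inner_sum_right inner_commute)
        then show ?thesis by (simp add: q_def inner_diff_right)
      qed
      have "\<mu> l * (q \<bullet> q) = q \<bullet> (Dh *v w l)" using qw by (simp add: Dhw)
      also have "\<dots> = q \<bullet> (D *v w l) + q \<bullet> (E *v w l)" by (simp add: Ex inner_diff_right)
      also have "q \<bullet> (D *v w l) = (D *v q) \<bullet> w l" using sym_inner[OF symD] by simp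
      finally have mq: "\<mu> l * (q \<bullet> q) = q \<bullet> (E *v w l)" using Dq by simp
      have "\<bar>\<mu> l\<bar> * (norm q)^2 \<le> norm q * norm (E *v w l)"
        using mq Cauchy_Schwarz_ineq2[of q "E *v w l"]
        by (simp add: power2_norm_eq_inner abs_mult)
      then have "\<bar>\<mu> l\<bar> * norm q \<le> norm (E *v w l)"
        by (cases "norm q = 0") (auto simp: power2_eq_square)
      moreover have "\<gamma>/2 * norm q \<le> \<bar>\<mu> l\<bar> * norm q"
        using True mult_right_mono[of "\<gamma>/2" "\<bar>\<mu> l\<bar>" "norm q"] by simp
      ultimately have "\<gamma>/2 * \<bar>norm q\<bar> \<le> \<bar>norm (E *v w l)\<bar>" by simp
      from sq_le_from[OF g0 this] show ?thesis
        by (simp add: qq[symmetric] power2_norm_eq_inner)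
    qed
    have "\<gamma>^2 * (real CARD('k) - cs) = (\<Sum>l\<in>UNIV. \<gamma>^2 * (1 - (\<Sum>k\<in>UNIV. (w l \<bullet> v k)^2)))"
      by (simp add: cs_def sum_subtractf sum_distrib_left[symmetric] algebra_simps)
    also have "\<dots> \<le> (\<Sum>l\<in>UNIV. 4 * ((E *v w l) \<bullet> (E *v w l)))" by (rule sum_mono[OF each])
    also have "\<dots> = 4 * (\<Sum>l\<in>UNIV. (E *v w l) \<bullet> (E *v w l))" by (simp add: sum_distrib_left)
    also have "\<dots> \<le> 4 * frob_norm E ^ 2" using frob_bessel[of UNIV w E] ww by simp
    finally show ?thesis .
  next
    case False
    then obtain l0 where l0: "\<bar>\<mu> l0\<bar> < \<gamma>/2" using not_le by blast
    define C where "C = {x. \<forall>l. w l \<bullet> x = 0}"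
    have "C = {y. \<forall>x\<in>range w. orthogonal x y}" by (auto simp: C_def orthogonal_def)
    then have sC: "subspace C" using subspace_orthogonal_to_vectors[of "range w"] by simp
    have invC: "\<forall>x\<in>C. Dh *v x \<in> C"
    proof
      fix x assume "x \<in> C"
      have "w k \<bullet> (Dh *v x) = 0" for k
        using sym_inner[OF symDh, of "w k" x] \<open>x \<in> C\<close> by (simp add: Dhw C_def)
      then show "Dh *v x \<in> C" by (simp add: C_def)
    qed
    obtain B where B: "B \<subseteq> C" "finite B" "pairwise orthogonal B"
        "\<forall>b\<in>B. norm b = 1 \<and> Dh *v b = (b \<bullet> (Dh *v b)) *\<^sub>R b" "C \<subseteq> span B"
      using sym_eig_basis[OF symDh sC invC] by blast
    have Bon: "\<And>i j. i \<in> B \<Longrightarrow> j \<in> B \<Longrightarrow> id i \<bullet> id j = (if i = j then 1 else 0)"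
      using B(3,4) by (auto simp: pairwise_def orthogonal_def norm_eq_1)
    have nub: "\<bar>b \<bullet> (Dh *v b)\<bar> < \<gamma>/2" if "b \<in> B" for b
    proof -
      have "b \<noteq> 0" using B(4) that by auto
      moreover have "\<forall>k. column k Vh \<bullet> b = 0" using B(1) that by (auto simp: C_def w_def)
      ultimately have "\<bar>b \<bullet> (Dh *v b)\<bar> \<le> \<bar>\<mu> l0\<bar>" using toph B(4) that by (auto simp: \<mu>_def)
      then show ?thesis using l0 by simp
    qed
    have each: "\<gamma>^2 * (1 - (\<Sum>l\<in>UNIV. (w l \<bullet> v k)^2)) \<le> 4 * ((E *v v k) \<bullet> (E *v v k))" for k
    proof -
      define r where "r = v k - (\<Sum>l\<in>UNIV. (w l \<bullet> v k) *\<^sub>R w l)"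
      have rC: "r \<in> C" using proj_perp[OF Vh] by (simp add: C_def r_def w_def)
      have rr: "r \<bullet> r = 1 - (\<Sum>l\<in>UNIV. (w l \<bullet> v k)^2)"
        using proj_norm[OF Vh, of "v k"] vv[of k k] by (simp add: r_def w_def)
      have rb: "r \<bullet> b = v k \<bullet> b" if "b \<in> B" for b
      proof -
        have "w l \<bullet> b = 0" for l using B(1) that by (auto simp: C_def)
        then show ?thesis by (simp add: r_def inner_diff_left inner_sum_left)
      qed
      have pb: "\<gamma>^2 * (v k \<bullet> b)^2 \<le> 4 * ((E *v v k) \<bullet> b)^2" if bB: "b \<in> B" for b
      proof -
        define \<nu> where "\<nu> = b \<bullet> (Dh *v b)"
        have Dhb: "Dh *v b = \<nu> *\<^sub>R b" using B(4) bB by (simp add: \<nu>_def)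
        have "\<nu> * (v k \<bullet> b) = v k \<bullet> (Dh *v b)" by (simp add: Dhb)
        also have "\<dots> = v k \<bullet> (D *v b) + v k \<bullet> (E *v b)" by (simp add: Ex inner_diff_right)
        also have "v k \<bullet> (D *v b) = (D *v v k) \<bullet> b" using sym_inner[OF symD] by simp
        also have "v k \<bullet> (E *v b) = (E *v v k) \<bullet> b" using sym_inner[OF symE] by simp
        finally have "(\<nu> - lam k) * (v k \<bullet> b) = (E *v v k) \<bullet> b" by (simp add: Dvk algebra_simps)
        moreover have "\<gamma>/2 \<le> \<bar>\<nu> - lam k\<bar>" using gk[of k] nub[OF bB] unfolding \<nu>_def by arith
        ultimately have "\<gamma>/2 * \<bar>v k \<bullet> b\<bar> \<le> \<bar>(E *v v k) \<bullet> b\<bar>"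
          by (metis abs_ge_zero abs_mult mult_right_mono)
        from sq_le_from[OF g0 this] show ?thesis .
      qed
      have "r \<in> span B" using rC B(5) by blast
      then have "r \<bullet> r = (\<Sum>b\<in>B. (r \<bullet> b)^2)" using parseval_set B(2,3,4) by blast
      then have "\<gamma>^2 * (r \<bullet> r) = (\<Sum>b\<in>B. \<gamma>^2 * (v k \<bullet> b)^2)"
        by (simp add: sum_distrib_left rb)
      also have "\<dots> \<le> (\<Sum>b\<in>B. 4 * ((E *v v k) \<bullet> b)^2)" by (rule sum_mono[OF pb])
      also have "\<dots> = 4 * (\<Sum>b\<in>B. ((E *v v k) \<bullet> id b)^2)" by (simp add: sum_distrib_left)
      also have "\<dots> \<le> 4 * ((E *v v k) \<bullet> (E *v v k))"
        using bessel_vec[OF B(2) Bon, of "E *v v k"] by simp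
      finally show ?thesis using rr by simp
    qed
    have "cs = (\<Sum>k\<in>UNIV. \<Sum>l\<in>UNIV. (w l \<bullet> v k)^2)" unfolding cs_def by (rule sum.swap)
    then have "\<gamma>^2 * (real CARD('k) - cs) = (\<Sum>k\<in>UNIV. \<gamma>^2 * (1 - (\<Sum>l\<in>UNIV. (w l \<bullet> v k)^2)))"
      by (simp add: sum_subtractf sum_distrib_left[symmetric] algebra_simps)
    also have "\<dots> \<le> (\<Sum>k\<in>UNIV. 4 * ((E *v v k) \<bullet> (E *v v k)))" by (rule sum_mono[OF each])
    also have "\<dots> = 4 * (\<Sum>k\<in>UNIV. (E *v v k) \<bullet> (E *v v k))" by (simp add: sum_distrib_left)
    also have "\<dots> \<le> 4 * frob_norm E ^ 2" using frob_bessel[of UNIV v E] vv by simp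
    finally show ?thesis .
  qed
  then show ?thesis using g0 fN by (simp add: \<gamma>_def E_def)
qed

lemma frob_norm_eq: "frob_norm (X::real^'k^'t) = norm X"
proof -
  have "frob_norm X ^ 2 = norm X ^ 2" by (simp add: frob_sq_rows power2_norm_eq_inner inner_vec_def)
  moreover have "0 \<le> frob_norm X" by (simp add: frob_norm_def sum_nonneg)
  ultimately show ?thesis using power2_eq_imp_eq norm_ge_zero by blast
qed

lemma dist_sym: "transpose (dist_matrix P) = dist_matrix P"
  by (simp add: dist_matrix_def transpose_def vec_eq_iff frob_norm_eq norm_minus_commute)

lemma frob_E_bound:
  fixes P Ph :: "'t::finite \<Rightarrow> real^'n^'n"
  shows "frob_norm (dist_matrix Ph - dist_matrix P)^2
     \<le> 4 * real CARD('t) * (\<Sum>i\<in>UNIV. frob_norm (Ph i - P i)^2)"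
proof -
  define a where "a i = norm (Ph i - P i)" for i
  have e: "((dist_matrix Ph - dist_matrix P) $ i $ j)^2 \<le> 2 * (a i)^2 + 2 * (a j)^2" for i j
  proof -
    have "\<bar>(dist_matrix Ph - dist_matrix P) $ i $ j\<bar> = \<bar>norm (Ph i - Ph j) - norm (P i - P j)\<bar>"
      by (simp add: dist_matrix_def frob_norm_eq)
    also have "\<dots> \<le> norm ((Ph i - Ph j) - (P i - P j))" by (rule norm_triangle_ineq3)
    also have "(Ph i - Ph j) - (P i - P j) = (Ph i - P i) - (Ph j - P j)" by simp
    also have "norm \<dots> \<le> a i + a j" unfolding a_def by (rule norm_triangle_ineq4)
    finally have "\<bar>(dist_matrix Ph - dist_matrix P) $ i $ j\<bar> \<le> a i + a j" .
    then have "((dist_matrix Ph - dist_matrix P) $ i $ j)^2 \<le> (a i + a j)^2"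
      by (metis abs_ge_zero power2_abs power_mono)
    also have "\<dots> \<le> 2 * (a i)^2 + 2 * (a j)^2"
    proof -
      have "(a i + a j)^2 = (a i)^2 + (a j)^2 + 2*a i*a j" by (simp add: power2_sum)
      moreover have "(a i - a j)^2 = (a i)^2 + (a j)^2 - 2*a i*a j" by (simp add: power2_diff)
      moreover have "0 \<le> (a i - a j)^2" by simp
      ultimately show ?thesis by linarith
    qed
    finally show ?thesis .
  qed
  have "frob_norm (dist_matrix Ph - dist_matrix P)^2 = (\<Sum>i\<in>UNIV. \<Sum>j\<in>UNIV. ((dist_matrix Ph - dist_matrix P) $ i $ j)^2)"
    unfolding frob_norm_def by (simp add: sum_nonneg)
  also have "\<dots> \<le> (\<Sum>i\<in>UNIV. \<Sum>j\<in>UNIV. 2 * (a i)^2 + 2 * (a j)^2)"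
    by (intro sum_mono e)
  also have "\<dots> = 4 * real CARD('t) * (\<Sum>i\<in>UNIV. (a i)^2)"
    by (simp add: sum.distrib sum_distrib_left[symmetric] algebra_simps)
  finally show ?thesis by (simp add: a_def frob_norm_eq)
qed

lemma det_bound:
  fixes P Ph :: "'t::finite \<Rightarrow> real^'n^'n" and V Vh :: "real^'k::finite^'t"
  assumes rk: "rank (dist_matrix P) = CARD('k)"
    and tV: "top_abs_eigvecs (dist_matrix P) V" and tVh: "top_abs_eigvecs (dist_matrix Ph) Vh"
  shows "\<exists>Q. orthogonal_matrix Q \<and> frob_norm (Vh ** Q - V)^2 \<le>
     32 * real CARD('t) * (\<Sum>i\<in>UNIV. frob_norm (Ph i - P i)^2) / (min_nonzero_abs_eig (dist_matrix P))^2"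
proof -
  define \<gamma> where "\<gamma> = min_nonzero_abs_eig (dist_matrix P)"
  define s where "s = (\<Sum>i\<in>UNIV. frob_norm (Ph i - P i)^2)"
  have sb: "0 < \<gamma> \<and> \<gamma>^2 * (real CARD('k) - frob_norm (transpose Vh ** V)^2)
        \<le> 4 * frob_norm (dist_matrix Ph - dist_matrix P)^2"
    using sin_bound[OF dist_sym dist_sym rk tV tVh] by (simp add: \<gamma>_def)
  have VhO: "transpose Vh ** Vh = mat 1" using tVh by (simp add: top_abs_eigvecs_def)
  have VO: "transpose V ** V = mat 1" using tV by (simp add: top_abs_eigvecs_def)
  obtain Q where Q: "orthogonal_matrix Q"
    "frob_norm (Vh ** Q - V)^2 \<le> 2 * (real CARD('k) - frob_norm (transpose Vh ** V)^2)"
    using procrustes[OF VhO VO] by blast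
  have g0: "0 < \<gamma>^2" using sb by simp
  have "\<gamma>^2 * frob_norm (Vh ** Q - V)^2 \<le> \<gamma>^2 * (2 * (real CARD('k) - frob_norm (transpose Vh ** V)^2))"
    using Q(2) g0 by (simp add: mult_left_mono)
  also have "\<dots> = 2 * (\<gamma>^2 * (real CARD('k) - frob_norm (transpose Vh ** V)^2))" by simp
  also have "\<dots> \<le> 8 * frob_norm (dist_matrix Ph - dist_matrix P)^2" using sb by linarith
  also have "\<dots> \<le> 32 * real CARD('t) * s" using frob_E_bound[of Ph P] by (simp add: s_def)
  finally have "\<gamma>^2 * frob_norm (Vh ** Q - V)^2 \<le> 32 * real CARD('t) * s" .
  then have "frob_norm (Vh ** Q - V)^2 \<le> 32 * real CARD('t) * s / \<gamma>^2"
    using g0 by (simp add: field_simps)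
  then show ?thesis using Q(1) by (auto simp: s_def \<gamma>_def)
qed

theorem corollary1:
  fixes M :: "'a measure"
    and P :: "'t::finite \<Rightarrow> real^'n::finite^'n"
    and Phat :: "'a \<Rightarrow> 't \<Rightarrow> real^'n^'n"
    and V :: "real^'k::finite^'t"
    and C :: "'t \<Rightarrow> real"
    and \<epsilon> :: "'t \<Rightarrow> real"
    and \<alpha> \<beta> :: real
  assumes "prob_space M"
    and "\<alpha> > 0" and "\<beta> > 0"
    and "rank (dist_matrix P) = CARD('k)"
    and "top_abs_eigvecs (dist_matrix P) V"
  defines "n \<equiv> real CARD('n)"
    and "T \<equiv> real CARD('t)"
    and "CT \<equiv> Max (range C)"
    and "\<gamma> \<equiv> min_nonzero_abs_eig (dist_matrix P)"
  defines "bound \<equiv> 64 * CT * T^2 * n powr (2 - \<alpha>) * ln n powr \<beta> / \<gamma>^2"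
  shows
    \<comment> \<open>in-expectation version\<close>
    "((\<forall>i. (\<lambda>\<omega>. Phat \<omega> i) \<in> borel_measurable M) \<and>
      (\<forall>i. (\<integral>\<^sup>+\<omega>. ennreal ((frob_norm (Phat \<omega> i - P i))^2 / n^2) \<partial>M)
              \<le> ennreal (C i * n powr (-\<alpha>) * ln n powr \<beta>))
      \<longrightarrow> (\<forall>Vhat :: 'a \<Rightarrow> real^'k^'t.
             (\<forall>\<omega>. top_abs_eigvecs (dist_matrix (Phat \<omega>)) (Vhat \<omega>)) \<longrightarrow>
             (\<exists>Ohat :: 'a \<Rightarrow> real^'k^'k. (\<forall>\<omega>. orthogonal_matrix (Ohat \<omega>)) \<and>
                (\<integral>\<^sup>+\<omega>. ennreal ((frob_norm (Vhat \<omega> ** Ohat \<omega> - V))^2) \<partial>M)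
                   \<le> ennreal bound)))
     \<and>
     \<comment> \<open>high-probability version\<close>
     ((\<forall>i. \<exists>A\<in>sets M. measure M A \<ge> 1 - \<epsilon> i \<and>
             (\<forall>\<omega>\<in>A. (frob_norm (Phat \<omega> i - P i))^2 / n^2
                        \<le> C i * n powr (-\<alpha>) * ln n powr \<beta>))
      \<longrightarrow> (\<exists>A\<in>sets M. measure M A \<ge> 1 - (\<Sum>i\<in>UNIV. \<epsilon> i) \<and>
             (\<forall>\<omega>\<in>A. \<forall>Vhat :: real^'k^'t.
                top_abs_eigvecs (dist_matrix (Phat \<omega>)) Vhat \<longrightarrow>
                (\<exists>Ohat :: real^'k^'k. orthogonal_matrix Ohat \<and>
                   (frob_norm (Vhat ** Ohat - V))^2 \<le> bound))))"
proof -
  interpret prob_space M by (rule assms(1))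
  have n_eq: "n = real CARD('n)" and T_eq: "T = real CARD('t)" and CT_eq: "CT = Max (range C)"
    and g_eq: "\<gamma> = min_nonzero_abs_eig (dist_matrix P)"
    and b_eq: "bound = 64 * CT * T^2 * n powr (2 - \<alpha>) * ln n powr \<beta> / \<gamma>^2"
    using assms(6-10) by simp_all
  have n0: "0 < n" by (simp add: n_eq card_gt_0_iff)
  have T0: "0 < T" by (simp add: T_eq card_gt_0_iff)
  define X where "X = n powr (- \<alpha>) * ln n powr \<beta>"
  have X0: "0 \<le> X" by (simp add: X_def)
  have Y: "n powr (2 - \<alpha>) * ln n powr \<beta> = n^2 * X"
  proof -
    have "n powr (2 - \<alpha>) = n powr 2 * n powr (- \<alpha>)" using powr_add[of n 2 "- \<alpha>"] by simp
    then show ?thesis using n0 by (simp add: X_def)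
  qed
  have bnd: "bound = 64 * CT * T^2 * (n^2 * X) / \<gamma>^2"
    unfolding b_eq by (simp add: Y[symmetric] mult.assoc)
  have CiT: "C i \<le> CT" for i unfolding CT_eq by (rule Max_ge) auto
  define w where "w = 32 * T * T * CT * (n^2 * X) / \<gamma>^2"
  have bw: "bound = 2 * w" by (simp add: bnd w_def power2_eq_square)
  have core: "\<exists>Q. orthogonal_matrix Q \<and> frob_norm (Vh ** Q - V)^2 \<le> 32 * T * s / \<gamma>^2 \<and>
      0 \<le> 32 * T * s / \<gamma>^2 \<and> 32 * T * s / \<gamma>^2 \<le> w"
    if tVh: "top_abs_eigvecs (dist_matrix Ph) Vh" and s: "s = (\<Sum>i\<in>UNIV. frob_norm (Ph i - P i)^2)"
      and a: "\<forall>i. frob_norm (Ph i - P i)^2 \<le> C i * (n^2 * X)"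
    for Ph :: "'t \<Rightarrow> real^'n^'n" and Vh and s
  proof -
    obtain Q where Q: "orthogonal_matrix Q" "frob_norm (Vh ** Q - V)^2 \<le> 32 * T * s / \<gamma>^2"
      using det_bound[OF assms(4) assms(5) tVh] by (auto simp: T_eq g_eq s)
    have s0: "0 \<le> s" unfolding s by (simp add: sum_nonneg)
    have "s \<le> (\<Sum>i\<in>(UNIV::'t set). CT * (n^2 * X))"
      unfolding s
    proof (rule sum_mono)
      fix i
      have "C i * (n^2 * X) \<le> CT * (n^2 * X)" using CiT[of i] X0 by (simp add: mult_right_mono)
      then show "frob_norm (Ph i - P i)^2 \<le> CT * (n^2 * X)" using a by (meson order_trans)
    qed
    also have "\<dots> = T * (CT * (n^2 * X))" by (simp add: T_eq)
    finally have sT: "s \<le> T * (CT * (n^2 * X))" .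
    have "32 * T * s \<le> 32 * T * (T * (CT * (n^2 * X)))" using sT T0 by simp
    then have "32 * T * s / \<gamma>^2 \<le> 32 * T * (T * (CT * (n^2 * X))) / \<gamma>^2"
      by (simp add: divide_right_mono)
    also have "\<dots> = w" by (simp add: w_def mult.assoc)
    finally have "32 * T * s / \<gamma>^2 \<le> w" .
    moreover have "0 \<le> 32 * T * s / \<gamma>^2" using s0 T0 by simp
    ultimately show ?thesis using Q by blast
  qed
  have hyp_conv: "frob_norm (Ph - P i)^2 \<le> C i * (n^2 * X)"
    if "frob_norm (Ph - P i)^2 / n^2 \<le> C i * n powr (- \<alpha>) * ln n powr \<beta>" for Ph i
  proof -
    have "frob_norm (Ph - P i)^2 / n^2 \<le> C i * X" using that by (simp add: X_def mult.assoc)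
    then have "frob_norm (Ph - P i)^2 \<le> C i * X * n^2" using n0 by (simp add: divide_le_eq)
    then show ?thesis by (simp add: algebra_simps)
  qed
  show ?thesis
  proof
    show "((\<forall>i. (\<lambda>\<omega>. Phat \<omega> i) \<in> borel_measurable M) \<and>
      (\<forall>i. (\<integral>\<^sup>+\<omega>. ennreal ((frob_norm (Phat \<omega> i - P i))^2 / n^2) \<partial>M)
              \<le> ennreal (C i * n powr (-\<alpha>) * ln n powr \<beta>))
      \<longrightarrow> (\<forall>Vhat :: 'a \<Rightarrow> real^'k^'t.
             (\<forall>\<omega>. top_abs_eigvecs (dist_matrix (Phat \<omega>)) (Vhat \<omega>)) \<longrightarrow>
             (\<exists>Ohat :: 'a \<Rightarrow> real^'k^'k. (\<forall>\<omega>. orthogonal_matrix (Ohat \<omega>)) \<and>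
                (\<integral>\<^sup>+\<omega>. ennreal ((frob_norm (Vhat \<omega> ** Ohat \<omega> - V))^2) \<partial>M)
                   \<le> ennreal bound)))"
    proof (intro impI allI)
      fix Vhat :: "'a \<Rightarrow> real^'k^'t"
      assume H: "(\<forall>i. (\<lambda>\<omega>. Phat \<omega> i) \<in> borel_measurable M) \<and>
        (\<forall>i. (\<integral>\<^sup>+\<omega>. ennreal ((frob_norm (Phat \<omega> i - P i))^2 / n^2) \<partial>M)
              \<le> ennreal (C i * n powr (-\<alpha>) * ln n powr \<beta>))"
        and tV: "\<forall>\<omega>. top_abs_eigvecs (dist_matrix (Phat \<omega>)) (Vhat \<omega>)"
      define sf where "sf \<omega> = (\<Sum>i\<in>UNIV. frob_norm (Phat \<omega> i - P i)^2)" for \<omega>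
      have ex: "\<forall>\<omega>. \<exists>Q. orthogonal_matrix Q \<and> frob_norm (Vhat \<omega> ** Q - V)^2 \<le> 32 * T * sf \<omega> / \<gamma>^2"
        using det_bound[OF assms(4) assms(5)] tV by (auto simp: T_eq g_eq sf_def)
      then obtain Oh where Oh: "\<forall>\<omega>. orthogonal_matrix (Oh \<omega>) \<and>
          frob_norm (Vhat \<omega> ** Oh \<omega> - V)^2 \<le> 32 * T * sf \<omega> / \<gamma>^2"
        by metis
      define \<kappa> where "\<kappa> = 32 * T / \<gamma>^2 * n^2"
      have \<kappa>0: "0 \<le> \<kappa>" using T0 by (simp add: \<kappa>_def)
      define f where "f i \<omega> = (frob_norm (Phat \<omega> i - P i))^2 / n^2" for i \<omega>
      have f0: "0 \<le> f i \<omega>" for i \<omega> by (simp add: f_def)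
      have meas: "(\<lambda>\<omega>. ennreal (f i \<omega>)) \<in> borel_measurable M" for i
      proof -
        have [measurable]: "(\<lambda>\<omega>. Phat \<omega> i) \<in> borel_measurable M" using H by blast
        show ?thesis unfolding f_def frob_norm_eq by measurable
      qed
      have pw: "ennreal ((frob_norm (Vhat \<omega> ** Oh \<omega> - V))^2) \<le> (\<Sum>i\<in>UNIV. ennreal \<kappa> * ennreal (f i \<omega>))" for \<omega>
      proof -
        have "\<kappa> * f i \<omega> = 32 * T / \<gamma>^2 * (frob_norm (Phat \<omega> i - P i))^2" for i
          using n0 by (simp add: \<kappa>_def f_def)
        then have "(\<Sum>i\<in>UNIV. \<kappa> * f i \<omega>) = 32 * T * sf \<omega> / \<gamma>^2"
          by (simp add: sf_def sum_distrib_left sum_divide_distrib)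
        then have "(frob_norm (Vhat \<omega> ** Oh \<omega> - V))^2 \<le> (\<Sum>i\<in>UNIV. \<kappa> * f i \<omega>)" using Oh by simp
        then have "ennreal ((frob_norm (Vhat \<omega> ** Oh \<omega> - V))^2) \<le> ennreal (\<Sum>i\<in>UNIV. \<kappa> * f i \<omega>)"
          by (rule ennreal_leI)
        also have "\<dots> = (\<Sum>i\<in>UNIV. ennreal (\<kappa> * f i \<omega>))"
          using \<kappa>0 f0 by (simp add: sum_ennreal)
        also have "\<dots> = (\<Sum>i\<in>UNIV. ennreal \<kappa> * ennreal (f i \<omega>))"
          using \<kappa>0 by (simp add: ennreal_mult')
        finally show ?thesis .
      qed
      define m where "m = max 0 CT * X"
      have m0: "0 \<le> m" using X0 by (simp add: m_def)
      have each: "(\<integral>\<^sup>+\<omega>. ennreal \<kappa> * ennreal (f i \<omega>) \<partial>M) \<le> ennreal \<kappa> * ennreal m" for i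
      proof -
        have "(\<integral>\<^sup>+\<omega>. ennreal \<kappa> * ennreal (f i \<omega>) \<partial>M) = ennreal \<kappa> * (\<integral>\<^sup>+\<omega>. ennreal (f i \<omega>) \<partial>M)"
          by (rule nn_integral_cmult[OF meas])
        also have "(\<integral>\<^sup>+\<omega>. ennreal (f i \<omega>) \<partial>M) \<le> ennreal (C i * n powr (-\<alpha>) * ln n powr \<beta>)"
          using H by (simp add: f_def)
        also have "\<dots> \<le> ennreal m"
        proof (rule ennreal_leI)
          have "C i * X \<le> max 0 CT * X" using CiT[of i] X0 by (simp add: mult_right_mono)
          then show "C i * n powr (-\<alpha>) * ln n powr \<beta> \<le> m" by (simp add: m_def X_def mult.assoc)
        qed
        finally show ?thesis by (simp add: mult_left_mono)
      qed
      have "(\<integral>\<^sup>+\<omega>. ennreal ((frob_norm (Vhat \<omega> ** Oh \<omega> - V))^2) \<partial>M)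
          \<le> (\<integral>\<^sup>+\<omega>. (\<Sum>i\<in>UNIV. ennreal \<kappa> * ennreal (f i \<omega>)) \<partial>M)"
        by (rule nn_integral_mono) (rule pw)
      also have "\<dots> = (\<Sum>i\<in>UNIV. (\<integral>\<^sup>+\<omega>. ennreal \<kappa> * ennreal (f i \<omega>) \<partial>M))"
        by (rule nn_integral_sum) (use meas in simp)
      also have "\<dots> \<le> (\<Sum>i\<in>(UNIV::'t set). ennreal \<kappa> * ennreal m)" by (rule sum_mono[OF each])
      also have "\<dots> = ennreal (T * (\<kappa> * m))"
        using \<kappa>0 m0 by (simp add: ennreal_mult'[symmetric] T_eq ennreal_of_nat_eq_real_of_nat
            flip: ennreal_mult)
      also have "\<dots> \<le> ennreal bound"
      proof (cases "0 \<le> CT")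
        case True
        then have "T * (\<kappa> * m) = w" by (simp add: m_def \<kappa>_def w_def)
        moreover have "0 \<le> w" using True T0 X0 by (simp add: w_def)
        ultimately show ?thesis using bw by simp
      next
        case False
        then have "m = 0" by (simp add: m_def)
        then show ?thesis by simp
      qed
      finally show "\<exists>Ohat :: 'a \<Rightarrow> real^'k^'k. (\<forall>\<omega>. orthogonal_matrix (Ohat \<omega>)) \<and>
                (\<integral>\<^sup>+\<omega>. ennreal ((frob_norm (Vhat \<omega> ** Ohat \<omega> - V))^2) \<partial>M) \<le> ennreal bound"
        using Oh by blast
    qed
  next
    show "(\<forall>i. \<exists>A\<in>sets M. measure M A \<ge> 1 - \<epsilon> i \<and>
             (\<forall>\<omega>\<in>A. (frob_norm (Phat \<omega> i - P i))^2 / n^2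
                        \<le> C i * n powr (-\<alpha>) * ln n powr \<beta>))
      \<longrightarrow> (\<exists>A\<in>sets M. measure M A \<ge> 1 - (\<Sum>i\<in>UNIV. \<epsilon> i) \<and>
             (\<forall>\<omega>\<in>A. \<forall>Vhat :: real^'k^'t.
                top_abs_eigvecs (dist_matrix (Phat \<omega>)) Vhat \<longrightarrow>
                (\<exists>Ohat :: real^'k^'k. orthogonal_matrix Ohat \<and>
                   (frob_norm (Vhat ** Ohat - V))^2 \<le> bound)))"
    proof
      assume H2: "\<forall>i. \<exists>A\<in>sets M. measure M A \<ge> 1 - \<epsilon> i \<and>
             (\<forall>\<omega>\<in>A. (frob_norm (Phat \<omega> i - P i))^2 / n^2
                        \<le> C i * n powr (-\<alpha>) * ln n powr \<beta>)"
      then obtain Af where Af: "\<forall>i. Af i \<in> sets M \<and> measure M (Af i) \<ge> 1 - \<epsilon> i \<and>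
             (\<forall>\<omega>\<in>Af i. (frob_norm (Phat \<omega> i - P i))^2 / n^2
                        \<le> C i * n powr (-\<alpha>) * ln n powr \<beta>)"
        by metis
      define A where "A = (\<Inter>i. Af i)"
      have AS: "A \<in> sets M" unfolding A_def using Af by (intro sets.finite_INT) auto
      have "space M - A = (\<Union>i. space M - Af i)" by (auto simp: A_def)
      then have "measure M (space M - A) \<le> (\<Sum>i\<in>UNIV. measure M (space M - Af i))"
        using finite_measure_subadditive_finite[of UNIV "\<lambda>i. space M - Af i"] Af by auto
      also have "\<dots> \<le> (\<Sum>i\<in>UNIV. \<epsilon> i)"
      proof (rule sum_mono)
        fix i
        have "measure M (space M - Af i) = 1 - measure M (Af i)" using Af prob_compl by blast
        moreover have "1 - \<epsilon> i \<le> measure M (Af i)" using Af by blast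
        ultimately show "measure M (space M - Af i) \<le> \<epsilon> i" by linarith
      qed
      finally have "measure M (space M - A) \<le> (\<Sum>i\<in>UNIV. \<epsilon> i)" .
      moreover have "measure M (space M - A) = 1 - measure M A" using AS prob_compl by blast
      ultimately have mA: "measure M A \<ge> 1 - (\<Sum>i\<in>UNIV. \<epsilon> i)" by simp
      have good: "\<exists>Ohat :: real^'k^'k. orthogonal_matrix Ohat \<and> (frob_norm (Vhat ** Ohat - V))^2 \<le> bound"
        if "\<omega> \<in> A" "top_abs_eigvecs (dist_matrix (Phat \<omega>)) Vhat" for \<omega> Vhat
      proof -
        have "\<forall>i. frob_norm (Phat \<omega> i - P i)^2 \<le> C i * (n^2 * X)"
          using Af that(1) hyp_conv by (auto simp: A_def)
        from core[OF that(2) refl this] obtain Q where Q: "orthogonal_matrix Q"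
          "frob_norm (Vhat ** Q - V)^2 \<le> 32 * T * (\<Sum>i\<in>UNIV. frob_norm (Phat \<omega> i - P i)^2) / \<gamma>^2"
          "0 \<le> 32 * T * (\<Sum>i\<in>UNIV. frob_norm (Phat \<omega> i - P i)^2) / \<gamma>^2"
          "32 * T * (\<Sum>i\<in>UNIV. frob_norm (Phat \<omega> i - P i)^2) / \<gamma>^2 \<le> w"
          by blast
        have "frob_norm (Vhat ** Q - V)^2 \<le> bound" using Q(2-4) bw by linarith
        then show ?thesis using Q(1) by blast
      qed
      show "\<exists>A\<in>sets M. measure M A \<ge> 1 - (\<Sum>i\<in>UNIV. \<epsilon> i) \<and>
             (\<forall>\<omega>\<in>A. \<forall>Vhat :: real^'k^'t.
                top_abs_eigvecs (dist_matrix (Phat \<omega>)) Vhat \<longrightarrow>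
                (\<exists>Ohat :: real^'k^'k. orthogonal_matrix Ohat \<and>
                   (frob_norm (Vhat ** Ohat - V))^2 \<le> bound))"
        using AS mA good by blast
    qed
  qed
qed

end
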